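(* For $n\ge0$ and $k\ge1$, $$\left|\Pi_n\wr C_k(1^11^2,1^12^2,1^21^1)\right|=\sum_{i_1+i_2+\dots+i_k=n}B(i_1)B(i_2)\cdots B(i_k),$$ where the sum is over all $k$-tuples of nonnegative integers $(i_1,\dots,i_k)$ with sum $n$ and $B(m)$ is the $m$th Bell number.
   Context: For $n\ge0$ let $[n]=\{1,\dots,n\}$. A $k$-colored set partition of $[n]$ is a set partition of $[n]$ together with an assignment of a color from $[k]$ to each element; $\Pi_n\wr C_k$ is the set of these. A colored partition $\sigma$ contains a two-element colored pattern in the pattern sense according to the following: $\sigma$ contains $1^11^2$ iff there are $i<j$ in the same block with color of $i$ strictly less than color of $j$; $\sigma$ contains $1^21^1$ iff there are $i<j$ in the same block with color of $i$ strictly greater than color of $j$; $\sigma$ contains $1^12^2$ iff there are $i<j$ in different blocks with color of $i$ strictly less than color of $j$. $\Pi_n\wr C_k(S)$ is the set of $\sigma\in\Pi_n\wr C_k$ containing none of the patterns in $S$. $B(m)$ is the number of set partitions of $[m]$, with $B(0)=1$. *)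

theory Defs
  imports Main "HOL-Library.Disjoint_Sets" "HOL-Library.FuncSet"
begin

definition set_partitions :: "nat \<Rightarrow> nat set set set" where
  "set_partitions m = {P. partition_on {1..m} P}"

definition Bell :: "nat \<Rightarrow> nat" where
  "Bell m = card (set_partitions m)"

definition colored_partitions :: "nat \<Rightarrow> nat \<Rightarrow> (nat set set \<times> (nat \<Rightarrow> nat)) set" where
  "colored_partitions n k = set_partitions n \<times> ({1..n} \<rightarrow>\<^sub>E {1..k})"

definition same_block :: "nat set set \<Rightarrow> nat \<Rightarrow> nat \<Rightarrow> bool" where
  "same_block P i j \<longleftrightarrow> (\<exists>B\<in>P. i \<in> B \<and> j \<in> B)"

definition contains_11_12 :: "nat set set \<times> (nat \<Rightarrow> nat) \<Rightarrow> bool" where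
  "contains_11_12 \<sigma> \<longleftrightarrow> (\<exists>i j. i < j \<and> same_block (fst \<sigma>) i j \<and> snd \<sigma> i < snd \<sigma> j)"

definition contains_12_11 :: "nat set set \<times> (nat \<Rightarrow> nat) \<Rightarrow> bool" where
  "contains_12_11 \<sigma> \<longleftrightarrow> (\<exists>i j. i < j \<and> same_block (fst \<sigma>) i j \<and> snd \<sigma> i > snd \<sigma> j)"

definition contains_11_22 :: "nat \<Rightarrow> nat set set \<times> (nat \<Rightarrow> nat) \<Rightarrow> bool" where
  "contains_11_22 n \<sigma> \<longleftrightarrow> (\<exists>i j. 1 \<le> i \<and> i < j \<and> j \<le> n \<and> \<not> same_block (fst \<sigma>) i j
       \<and> snd \<sigma> i < snd \<sigma> j)"

definition avoiders :: "nat \<Rightarrow> nat \<Rightarrow> (nat set set \<times> (nat \<Rightarrow> nat)) set" where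
  "avoiders n k = {\<sigma> \<in> colored_partitions n k.
     \<not> contains_11_12 \<sigma> \<and> \<not> contains_11_22 n \<sigma> \<and> \<not> contains_12_11 \<sigma>}"

definition compositions :: "nat \<Rightarrow> nat \<Rightarrow> (nat \<Rightarrow> nat) set" where
  "compositions k n = {t \<in> {1..k} \<rightarrow>\<^sub>E (UNIV :: nat set). (\<Sum>j=1..k. t j) = n}"

end

theory Submission
  imports Defs
begin

lemma part_inj_le:
  assumes "finite A" "inj_on f A"
  shows "card {P. partition_on A P} \<le> card {Q. partition_on (f ` A) Q}"
proof (rule card_inj_on_le[where f="\<lambda>P. (`) f ` P"])
  show "finite {Q. partition_on (f ` A) Q}"
    using finitely_many_partition_on assms(1) by blast
  show "(\<lambda>P. (`) f ` P) ` {P. partition_on A P} \<subseteq> {Q. partition_on (f ` A) Q}"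
  proof
    fix Q assume "Q \<in> (\<lambda>P. (`) f ` P) ` {P. partition_on A P}"
    then obtain P where P: "partition_on A P" and Q: "Q = (`) f ` P" by auto
    have "(`) f ` P - {{}} = Q" using P Q by (auto dest: partition_onD3)
    then show "Q \<in> {Q. partition_on (f ` A) Q}"
      using partition_on_inj_image[OF P assms(2)] by simp
  qed
  show "inj_on (\<lambda>P. (`) f ` P) {P. partition_on A P}"
  proof (rule inj_onI)
    fix P P' assume P: "P \<in> {P. partition_on A P}" and P': "P' \<in> {P. partition_on A P}"
      and eq: "(`) f ` P = (`) f ` P'"
    have sub: "\<And>B. B \<in> P \<Longrightarrow> B \<subseteq> A" "\<And>B. B \<in> P' \<Longrightarrow> B \<subseteq> A"
      using P P' by (auto dest: partition_onD1)
    have inj2: "\<And>B B'. B \<subseteq> A \<Longrightarrow> B' \<subseteq> A \<Longrightarrow> f ` B = f ` B' \<Longrightarrow> B = B'"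
      using assms(2) by (meson inj_on_image_eq_iff)
    show "P = P'"
    proof
      show "P \<subseteq> P'"
      proof
        fix B assume "B \<in> P"
        then have "f ` B \<in> (`) f ` P'" using eq by auto
        then obtain B' where "B' \<in> P'" "f ` B = f ` B'" by auto
        then show "B \<in> P'" using inj2 sub \<open>B \<in> P\<close> by metis
      qed
      show "P' \<subseteq> P"
      proof
        fix B assume "B \<in> P'"
        then have "f ` B \<in> (`) f ` P" using eq by auto
        then obtain B' where "B' \<in> P" "f ` B = f ` B'" by auto
        then show "B \<in> P" using inj2 sub \<open>B \<in> P'\<close> by metis
      qed
    qed
  qed
qed

lemma part_inj_eq:
  assumes "finite A" "inj_on f A"
  shows "card {Q. partition_on (f ` A) Q} = card {P. partition_on A P}"
proof -
  have "inj_on (inv_into A f) (f ` A)" by (simp add: inj_on_inv_into)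
  moreover have "inv_into A f ` (f ` A) = A" using assms(2) by simp
  ultimately have "card {Q. partition_on (f ` A) Q} \<le> card {P. partition_on A P}"
    using part_inj_le[of "f ` A" "inv_into A f"] assms by simp
  then show ?thesis using part_inj_le[OF assms] by simp
qed

lemma Bell_shift:
  assumes "m \<le> n"
  shows "card {Q. partition_on {n-m<..n} Q} = Bell m"
proof -
  have "{n-m<..n} = {1+(n-m)..m+(n-m)}" using assms by auto
  also have "\<dots> = plus (n-m) ` {1..m}" by (simp only: image_add_atLeastAtMost)
  finally have "{n-m<..n} = plus (n-m) ` {1..m}" .
  then show ?thesis
    using part_inj_eq[of "{1..m}" "plus (n-m)"]
    by (simp add: Bell_def set_partitions_def)
qed

lemma avoiders_char:
  "(P, c) \<in> avoiders n k \<longleftrightarrow> partition_on {1..n} P \<and> c \<in> {1..n} \<rightarrow>\<^sub>E {1..k}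
    \<and> (\<forall>i j. 1 \<le> i \<longrightarrow> i \<le> j \<longrightarrow> j \<le> n \<longrightarrow> c j \<le> c i)
    \<and> (\<forall>B\<in>P. \<forall>i\<in>B. \<forall>j\<in>B. c i = c j)"
proof
  assume a: "(P, c) \<in> avoiders n k"
  then have p: "partition_on {1..n} P" and ce: "c \<in> {1..n} \<rightarrow>\<^sub>E {1..k}"
    and n1: "\<And>i j. i < j \<Longrightarrow> same_block P i j \<Longrightarrow> \<not> c i < c j"
    and n2: "\<And>i j. 1 \<le> i \<Longrightarrow> i < j \<Longrightarrow> j \<le> n \<Longrightarrow> \<not> same_block P i j \<Longrightarrow> \<not> c i < c j"
    and n3: "\<And>i j. i < j \<Longrightarrow> same_block P i j \<Longrightarrow> \<not> c i > c j"
    unfolding avoiders_def colored_partitions_def set_partitions_def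
      contains_11_12_def contains_11_22_def contains_12_11_def by auto
  have blk: "\<forall>B\<in>P. \<forall>i\<in>B. \<forall>j\<in>B. c i = c j"
  proof (intro ballI)
    fix B i j assume "B \<in> P" "i \<in> B" "j \<in> B"
    then have s1: "same_block P i j" "same_block P j i" by (auto simp: same_block_def)
    show "c i = c j"
    proof (cases i j rule: linorder_cases)
      case less then show ?thesis using n1[OF less s1(1)] n3[OF less s1(1)] by simp
    next
      case equal then show ?thesis by simp
    next
      case greater then show ?thesis using n1[OF greater s1(2)] n3[OF greater s1(2)] by simp
    qed
  qed
  have "\<forall>i j. 1 \<le> i \<longrightarrow> i \<le> j \<longrightarrow> j \<le> n \<longrightarrow> c j \<le> c i"
  proof (intro allI impI)
    fix i j assume h: "1 \<le> i" "i \<le> j" "j \<le> n"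
    show "c j \<le> c i"
    proof (cases "same_block P i j")
      case True then show ?thesis using blk unfolding same_block_def by fastforce
    next
      case False
      have "i \<in> \<Union>P" using h partition_onD1[OF p] by auto
      then have "i \<noteq> j" using False unfolding same_block_def by auto
      then have "i < j" using h by simp
      then show ?thesis using n2[OF h(1) _ h(3) False] by simp
    qed
  qed
  then show "partition_on {1..n} P \<and> c \<in> {1..n} \<rightarrow>\<^sub>E {1..k}
    \<and> (\<forall>i j. 1 \<le> i \<longrightarrow> i \<le> j \<longrightarrow> j \<le> n \<longrightarrow> c j \<le> c i)
    \<and> (\<forall>B\<in>P. \<forall>i\<in>B. \<forall>j\<in>B. c i = c j)" using p ce blk by blast
next
  assume a: "partition_on {1..n} P \<and> c \<in> {1..n} \<rightarrow>\<^sub>E {1..k}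
    \<and> (\<forall>i j. 1 \<le> i \<longrightarrow> i \<le> j \<longrightarrow> j \<le> n \<longrightarrow> c j \<le> c i)
    \<and> (\<forall>B\<in>P. \<forall>i\<in>B. \<forall>j\<in>B. c i = c j)"
  then have eqb: "\<And>i j. same_block P i j \<Longrightarrow> c i = c j"
    unfolding same_block_def by blast
  have "\<not> contains_11_12 (P,c)" "\<not> contains_12_11 (P,c)"
    unfolding contains_11_12_def contains_12_11_def using eqb by auto
  moreover have "\<not> contains_11_22 n (P,c)"
  proof
    assume "contains_11_22 n (P,c)"
    then obtain i j where ij: "1 \<le> i" "i < j" "j \<le> n" "c i < c j"
      unfolding contains_11_22_def by auto
    moreover have "c j \<le> c i" using a ij by simp
    ultimately show False by simp
  qed
  ultimately show "(P, c) \<in> avoiders n k" using a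
    unfolding avoiders_def colored_partitions_def set_partitions_def by auto
qed

lemma comp_finite: "finite (compositions k n)"
proof (rule finite_subset)
  show "compositions k n \<subseteq> {1..k} \<rightarrow>\<^sub>E {0..n}"
  proof
    fix t assume t: "t \<in> compositions k n"
    then have "t j \<le> n" if "j \<in> {1..k}" for j
      using member_le_sum[of j "{1..k}" t] that unfolding compositions_def by auto
    then show "t \<in> {1..k} \<rightarrow>\<^sub>E {0..n}" using t unfolding compositions_def by auto
  qed
  show "finite ({1..k} \<rightarrow>\<^sub>E {0..n::nat})" by (rule finite_PiE) auto
qed

definition Fs :: "nat \<Rightarrow> nat \<Rightarrow> nat" where
  "Fs k n = (\<Sum>t\<in>compositions k n. \<Prod>j=1..k. Bell (t j))"

lemma F_0: "Fs 0 n = (if n = 0 then 1 else 0)"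
  unfolding Fs_def compositions_def by (auto simp: PiE_empty_domain)

lemma F_Suc: "Fs (Suc k) n = (\<Sum>m\<le>n. Bell m * Fs k (n-m))"
proof -
  let ?S = "Sigma {..n} (\<lambda>m. compositions k (n-m))"
  define h where "h = (\<lambda>t::nat\<Rightarrow>nat. (t 1, restrict (\<lambda>j. t (Suc j)) {1..k}))"
  define h' where "h' = (\<lambda>(m::nat, s::nat\<Rightarrow>nat). (\<lambda>j. if j = 1 then m else if j \<in> {2..Suc k} then s (j-1) else undefined))"
  have sumsplit: "sum t {1..Suc k} = t 1 + (\<Sum>j=1..k. t (Suc j))" for t :: "nat \<Rightarrow> nat"
    by (simp add: sum.atLeast_Suc_atMost sum.shift_bounds_cl_Suc_ivl[symmetric] del: sum.cl_ivl_Suc)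
  have prodsplit: "prod t {1..Suc k} = t 1 * (\<Prod>j=1..k. t (Suc j))" for t :: "nat \<Rightarrow> nat"
    by (simp add: prod.atLeast_Suc_atMost prod.shift_bounds_cl_Suc_ivl[symmetric] del: prod.cl_ivl_Suc)
  have bij: "bij_betw h (compositions (Suc k) n) ?S"
  proof (rule bij_betw_byWitness[where f'=h'])
    show "\<forall>a\<in>compositions (Suc k) n. h' (h a) = a"
    proof
      fix t assume t: "t \<in> compositions (Suc k) n"
      show "h' (h t) = t"
      proof
        fix j
        show "h' (h t) j = t j"
          using t unfolding h_def h'_def compositions_def
          by (cases "j = 1"; cases "j \<in> {2..Suc k}") (auto simp: PiE_def extensional_def)
      qed
    qed
    show "\<forall>a\<in>?S. h (h' a) = a"
    proof
      fix a assume a: "a \<in> ?S"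
      obtain m s where ms: "a = (m, s)" by (cases a)
      have "restrict (\<lambda>j. h' (m, s) (Suc j)) {1..k} = s"
      proof
        fix j show "restrict (\<lambda>j. h' (m, s) (Suc j)) {1..k} j = s j"
          using a ms unfolding h'_def compositions_def by (auto simp: PiE_def extensional_def)
      qed
      then show "h (h' a) = a" unfolding ms h_def by (simp add: h'_def)
    qed
    show "h ` compositions (Suc k) n \<subseteq> ?S"
    proof
      fix x assume "x \<in> h ` compositions (Suc k) n"
      then obtain t where t: "t \<in> compositions (Suc k) n" and x: "x = h t" by auto
      have "sum t {1..Suc k} = n" using t unfolding compositions_def by auto
      then have s: "t 1 + (\<Sum>j=1..k. t (Suc j)) = n" using sumsplit by simp
      have "(\<Sum>j=1..k. restrict (\<lambda>j. t (Suc j)) {1..k} j) = (\<Sum>j=1..k. t (Suc j))"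
        by (rule sum.cong) auto
      then show "x \<in> ?S" using s unfolding x h_def compositions_def by auto
    qed
    show "h' ` ?S \<subseteq> compositions (Suc k) n"
    proof
      fix x assume "x \<in> h' ` ?S"
      then obtain m s where ms: "m \<le> n" "s \<in> compositions k (n-m)" and x: "x = h' (m, s)" by auto
      have "(\<Sum>j=1..k. x (Suc j)) = (\<Sum>j=1..k. s j)"
        by (rule sum.cong) (auto simp: x h'_def)
      then have "sum x {1..Suc k} = n" using sumsplit[of x] ms unfolding compositions_def
        by (simp add: x h'_def)
      moreover have "x \<in> {1..Suc k} \<rightarrow>\<^sub>E UNIV" unfolding x h'_def by (auto simp: PiE_def extensional_def)
      ultimately show "x \<in> compositions (Suc k) n" unfolding compositions_def by auto
    qed
  qed
  have "Fs (Suc k) n = (\<Sum>t\<in>compositions (Suc k) n. Bell (fst (h t)) * (\<Prod>j=1..k. Bell (snd (h t) j)))"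
    unfolding Fs_def
  proof (rule sum.cong[OF refl])
    fix t
    have "(\<Prod>j=1..k. Bell (t (Suc j))) = (\<Prod>j=1..k. Bell (snd (h t) j))"
      by (rule prod.cong) (auto simp: h_def)
    then show "(\<Prod>j = 1..Suc k. Bell (t j)) = Bell (fst (h t)) * (\<Prod>j=1..k. Bell (snd (h t) j))"
      using prodsplit[of "\<lambda>j. Bell (t j)"] by (simp add: h_def)
  qed
  also have "\<dots> = (\<Sum>p\<in>?S. Bell (fst p) * (\<Prod>j=1..k. Bell (snd p j)))"
    using sum.reindex_bij_betw[OF bij, of "\<lambda>p. Bell (fst p) * (\<Prod>j=1..k. Bell (snd p j))"] .
  also have "\<dots> = (\<Sum>m\<le>n. \<Sum>s\<in>compositions k (n-m). Bell m * (\<Prod>j=1..k. Bell (s j)))"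
    by (subst sum.Sigma) (auto simp: comp_finite split_def)
  also have "\<dots> = (\<Sum>m\<le>n. Bell m * Fs k (n-m))"
    unfolding Fs_def by (simp add: sum_distrib_left)
  finally show ?thesis .
qed


definition cg :: "nat \<Rightarrow> nat \<Rightarrow> (nat \<Rightarrow> nat) \<Rightarrow> nat \<Rightarrow> nat" where
  "cg n m c2 = (\<lambda>i. if i \<in> {1..n} then (if i \<le> n-m then Suc (c2 i) else 1) else undefined)"

definition ch :: "nat \<Rightarrow> (nat \<Rightarrow> nat) \<Rightarrow> nat \<Rightarrow> nat" where
  "ch l c = (\<lambda>i. if i \<in> {1..l} then c i - 1 else undefined)"

lemma g_in:
  assumes mn: "m \<le> n" and Q: "partition_on {n-m<..n} Q" and P2: "(P2, c2) \<in> avoiders (n-m) k"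
  shows "(Q \<union> P2, cg n m c2) \<in> avoiders n (Suc k)"
    and "{i\<in>{1..n}. cg n m c2 i = 1} = {n-m<..n}"
proof -
  from P2 have X: "partition_on {1..n-m} P2 \<and> c2 \<in> {1..n-m} \<rightarrow>\<^sub>E {1..k}
    \<and> (\<forall>i j. 1 \<le> i \<longrightarrow> i \<le> j \<longrightarrow> j \<le> n-m \<longrightarrow> c2 j \<le> c2 i)
    \<and> (\<forall>B\<in>P2. \<forall>i\<in>B. \<forall>j\<in>B. c2 i = c2 j)" by (rule avoiders_char[THEN iffD1])
  then have p2: "partition_on {1..n-m} P2" and c2: "c2 \<in> {1..n-m} \<rightarrow>\<^sub>E {1..k}"
    and anti: "\<And>i j. 1 \<le> i \<Longrightarrow> i \<le> j \<Longrightarrow> j \<le> n-m \<Longrightarrow> c2 j \<le> c2 i"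
    and mono: "\<And>B i j. B \<in> P2 \<Longrightarrow> i \<in> B \<Longrightarrow> j \<in> B \<Longrightarrow> c2 i = c2 j"
    by blast+
  have QS: "\<And>B. B \<in> Q \<Longrightarrow> B \<subseteq> {n-m<..n}" using partition_onD1[OF Q] by auto
  have PL: "\<And>B. B \<in> P2 \<Longrightarrow> B \<subseteq> {1..n-m}" using partition_onD1[OF p2] by auto
  have SL: "{n-m<..n} \<inter> {1..n-m} = {}" by auto
  have part: "partition_on {1..n} (Q \<union> P2)"
  proof (rule partition_onI)
    have "\<Union>(Q \<union> P2) = {n-m<..n} \<union> {1..n-m}"
      using partition_onD1[OF Q] partition_onD1[OF p2] by simp
    also have "\<dots> = {1..n}" using mn by auto
    finally show "\<Union>(Q \<union> P2) = {1..n}" .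
    show "{} \<notin> Q \<union> P2" using partition_onD3[OF Q] partition_onD3[OF p2] by auto
    fix p q assume pq: "p \<in> Q \<union> P2" "q \<in> Q \<union> P2" "p \<noteq> q"
    show "disjnt p q"
    proof (cases "p \<in> Q")
      case True
      show ?thesis
      proof (cases "q \<in> Q")
        case True
        then show ?thesis using \<open>p \<in> Q\<close> pq(3) partition_onD2[OF Q] by (auto dest: pairwiseD)
      next
        case False
        then have "q \<in> P2" using pq by auto
        then show ?thesis using QS[OF \<open>p \<in> Q\<close>] PL[of q] SL unfolding disjnt_def by blast
      qed
    next
      case False
      then have p: "p \<in> P2" using pq by auto
      show ?thesis
      proof (cases "q \<in> Q")
        case True
        then show ?thesis using QS[OF True] PL[OF p] SL unfolding disjnt_def by blast
      next
        case False
        then have "q \<in> P2" using pq by auto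
        then show ?thesis using p pq(3) partition_onD2[OF p2] by (auto dest: pairwiseD)
      qed
    qed
  qed
  have ce: "cg n m c2 \<in> {1..n} \<rightarrow>\<^sub>E {1..Suc k}"
  proof -
    have "c2 i \<in> {1..k}" if "1 \<le> i" "i \<le> n-m" for i using c2 that by auto
    then show ?thesis unfolding cg_def by (auto simp: PiE_def extensional_def)
  qed
  have an: "\<forall>i j. 1 \<le> i \<longrightarrow> i \<le> j \<longrightarrow> j \<le> n \<longrightarrow> cg n m c2 j \<le> cg n m c2 i"
  proof (intro allI impI)
    fix i j assume ij: "1 \<le> i" "i \<le> j" "j \<le> n"
    show "cg n m c2 j \<le> cg n m c2 i"
    proof (cases "j \<le> n-m")
      case True
      then have "cg n m c2 j = Suc (c2 j)" "cg n m c2 i = Suc (c2 i)"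
        using ij unfolding cg_def by auto
      then show ?thesis using anti[OF ij(1,2) True] by simp
    next
      case False
      then have "cg n m c2 j = 1" using ij unfolding cg_def by auto
      moreover have "cg n m c2 i \<ge> 1" using ij unfolding cg_def by auto
      ultimately show ?thesis by simp
    qed
  qed
  have mo: "\<forall>B\<in>Q \<union> P2. \<forall>i\<in>B. \<forall>j\<in>B. cg n m c2 i = cg n m c2 j"
  proof (intro ballI)
    fix B i j assume B: "B \<in> Q \<union> P2" and ij: "i \<in> B" "j \<in> B"
    show "cg n m c2 i = cg n m c2 j"
    proof (cases "B \<in> Q")
      case True
      have "i \<in> {n-m<..n}" "j \<in> {n-m<..n}" using QS[OF True] ij by auto
      then have "cg n m c2 i = 1" "cg n m c2 j = 1" unfolding cg_def by auto
      then show ?thesis by simp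
    next
      case False
      then have "B \<in> P2" using B by auto
      have "i \<in> {1..n-m}" "j \<in> {1..n-m}" using PL[OF \<open>B \<in> P2\<close>] ij by auto
      then have "cg n m c2 i = Suc (c2 i)" "cg n m c2 j = Suc (c2 j)" unfolding cg_def by auto
      then show ?thesis using mono[OF \<open>B \<in> P2\<close> ij] by simp
    qed
  qed
  show "(Q \<union> P2, cg n m c2) \<in> avoiders n (Suc k)"
    by (rule avoiders_char[THEN iffD2], intro conjI part ce an mo)
  show "{i\<in>{1..n}. cg n m c2 i = 1} = {n-m<..n}"
  proof (intro set_eqI iffI)
    fix i assume "i \<in> {i\<in>{1..n}. cg n m c2 i = 1}"
    then have i1: "i \<in> {1..n}" and i2: "cg n m c2 i = 1" by auto
    have "\<not> i \<le> n-m"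
    proof
      assume le: "i \<le> n-m"
      then have "c2 i \<in> {1..k}" using c2 i1 by auto
      moreover have "cg n m c2 i = Suc (c2 i)" using le i1 unfolding cg_def by simp
      ultimately show False using i2 by simp
    qed
    then show "i \<in> {n-m<..n}" using i1 by auto
  next
    fix i assume "i \<in> {n-m<..n}"
    then show "i \<in> {i\<in>{1..n}. cg n m c2 i = 1}" unfolding cg_def by auto
  qed
qed

lemma blocks_split:
  assumes A: "(P, c) \<in> avoiders n (Suc k)" and fib: "{i\<in>{1..n}. c i = 1} = {n-m<..n}"
    and mn: "m \<le> n" and B: "B \<in> P"
  shows "B \<subseteq> {n-m<..n} \<or> B \<subseteq> {1..n-m}"
proof -
  from A have X: "partition_on {1..n} P \<and> c \<in> {1..n} \<rightarrow>\<^sub>E {1..Suc k}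
    \<and> (\<forall>i j. 1 \<le> i \<longrightarrow> i \<le> j \<longrightarrow> j \<le> n \<longrightarrow> c j \<le> c i)
    \<and> (\<forall>B\<in>P. \<forall>i\<in>B. \<forall>j\<in>B. c i = c j)" by (rule avoiders_char[THEN iffD1])
  then have p: "partition_on {1..n} P"
    and mono: "\<And>B i j. B \<in> P \<Longrightarrow> i \<in> B \<Longrightarrow> j \<in> B \<Longrightarrow> c i = c j"
    by blast+
  have Bsub: "B \<subseteq> {1..n}" using partition_onD1[OF p] B by auto
  have "B \<noteq> {}" using partition_onD3[OF p] B by auto
  then obtain x where x: "x \<in> B" by auto
  show ?thesis
  proof (cases "c x = 1")
    case True
    then have "\<forall>y\<in>B. y \<in> {i\<in>{1..n}. c i = 1}" using mono[OF B x] Bsub by auto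
    then show ?thesis using fib by blast
  next
    case False
    have "y \<in> {1..n-m}" if y: "y \<in> B" for y
    proof -
      have y1: "y \<in> {1..n}" and y2: "c y \<noteq> 1" using mono[OF B x y] Bsub y False by auto
      have "y \<notin> {i\<in>{1..n}. c i = 1}" using y2 by blast
      then have "y \<notin> {n-m<..n}" using fib by blast
      then show ?thesis using y1 by auto
    qed
    then show ?thesis by blast
  qed
qed

lemma h_in:
  assumes A: "(P, c) \<in> avoiders n (Suc k)" and fib: "{i\<in>{1..n}. c i = 1} = {n-m<..n}"
    and mn: "m \<le> n"
  shows "partition_on {n-m<..n} {B\<in>P. B \<subseteq> {n-m<..n}}"
    and "({B\<in>P. B \<subseteq> {1..n-m}}, ch (n-m) c) \<in> avoiders (n-m) k"
proof -
  from A have X: "partition_on {1..n} P \<and> c \<in> {1..n} \<rightarrow>\<^sub>E {1..Suc k}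
    \<and> (\<forall>i j. 1 \<le> i \<longrightarrow> i \<le> j \<longrightarrow> j \<le> n \<longrightarrow> c j \<le> c i)
    \<and> (\<forall>B\<in>P. \<forall>i\<in>B. \<forall>j\<in>B. c i = c j)" by (rule avoiders_char[THEN iffD1])
  then have p: "partition_on {1..n} P" and ce: "c \<in> {1..n} \<rightarrow>\<^sub>E {1..Suc k}"
    and anti: "\<And>i j. 1 \<le> i \<Longrightarrow> i \<le> j \<Longrightarrow> j \<le> n \<Longrightarrow> c j \<le> c i"
    and mono: "\<And>B i j. B \<in> P \<Longrightarrow> i \<in> B \<Longrightarrow> j \<in> B \<Longrightarrow> c i = c j"
    by blast+
  note bs = blocks_split[OF A fib mn]
  have cov: "\<exists>B\<in>P. x \<in> B" if "x \<in> {1..n}" for x using partition_onD1[OF p] that by auto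
  show "partition_on {n-m<..n} {B\<in>P. B \<subseteq> {n-m<..n}}"
  proof (rule partition_onI)
    show "\<Union>{B\<in>P. B \<subseteq> {n-m<..n}} = {n-m<..n}"
    proof
      show "{n-m<..n} \<subseteq> \<Union>{B\<in>P. B \<subseteq> {n-m<..n}}"
      proof
        fix x assume x: "x \<in> {n-m<..n}"
        then obtain B where "B \<in> P" "x \<in> B" using cov[of x] by auto
        then have "B \<subseteq> {n-m<..n}" using bs[of B] x by auto
        then show "x \<in> \<Union>{B\<in>P. B \<subseteq> {n-m<..n}}" using \<open>B \<in> P\<close> \<open>x \<in> B\<close> by auto
      qed
    qed auto
    show "{} \<notin> {B\<in>P. B \<subseteq> {n-m<..n}}" using partition_onD3[OF p] by auto
    fix p q assume "p \<in> {B\<in>P. B \<subseteq> {n-m<..n}}" "q \<in> {B\<in>P. B \<subseteq> {n-m<..n}}" "p \<noteq> q"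
    then show "disjnt p q" using partition_onD2[OF p] by (auto dest: pairwiseD)
  qed
  have pL: "partition_on {1..n-m} {B\<in>P. B \<subseteq> {1..n-m}}"
  proof (rule partition_onI)
    show "\<Union>{B\<in>P. B \<subseteq> {1..n-m}} = {1..n-m}"
    proof
      show "{1..n-m} \<subseteq> \<Union>{B\<in>P. B \<subseteq> {1..n-m}}"
      proof
        fix x assume x: "x \<in> {1..n-m}"
        then have "x \<in> {1..n}" by auto
        then obtain B where "B \<in> P" "x \<in> B" using cov[of x] by auto
        then have "B \<subseteq> {1..n-m}" using bs[of B] x by auto
        then show "x \<in> \<Union>{B\<in>P. B \<subseteq> {1..n-m}}" using \<open>B \<in> P\<close> \<open>x \<in> B\<close> by auto
      qed
    qed auto
    show "{} \<notin> {B\<in>P. B \<subseteq> {1..n-m}}" using partition_onD3[OF p] by auto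
    fix p q assume "p \<in> {B\<in>P. B \<subseteq> {1..n-m}}" "q \<in> {B\<in>P. B \<subseteq> {1..n-m}}" "p \<noteq> q"
    then show "disjnt p q" using partition_onD2[OF p] by (auto dest: pairwiseD)
  qed
  have cne: "c i \<noteq> 1" if "i \<in> {1..n-m}" for i
  proof
    assume "c i = 1"
    then have "i \<in> {i\<in>{1..n}. c i = 1}" using that by auto
    then have "i \<in> {n-m<..n}" using fib by blast
    then show False using that by auto
  qed
  have crange: "c i \<in> {1..Suc k}" if "i \<in> {1..n}" for i using ce that by auto
  have ce2: "ch (n-m) c \<in> {1..n-m} \<rightarrow>\<^sub>E {1..k}"
  proof -
    have "c i - 1 \<in> {1..k}" if "i \<in> {1..n-m}" for i
    proof -
      have "i \<in> {1..n}" using that by auto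
      then have "c i \<in> {1..Suc k}" by (rule crange)
      then show ?thesis using cne[OF that] by auto
    qed
    then show ?thesis unfolding ch_def by (auto simp: PiE_def extensional_def)
  qed
  have an2: "\<forall>i j. 1 \<le> i \<longrightarrow> i \<le> j \<longrightarrow> j \<le> n-m \<longrightarrow> ch (n-m) c j \<le> ch (n-m) c i"
    using anti unfolding ch_def by (auto intro: diff_le_mono)
  have mo2: "\<forall>B\<in>{B\<in>P. B \<subseteq> {1..n-m}}. \<forall>i\<in>B. \<forall>j\<in>B. ch (n-m) c i = ch (n-m) c j"
  proof (intro ballI)
    fix B i j assume B: "B \<in> {B\<in>P. B \<subseteq> {1..n-m}}" and ij: "i \<in> B" "j \<in> B"
    then have "i \<in> {1..n-m}" "j \<in> {1..n-m}" "c i = c j" using mono[of B i j] by auto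
    then show "ch (n-m) c i = ch (n-m) c j" unfolding ch_def by simp
  qed
  show "({B\<in>P. B \<subseteq> {1..n-m}}, ch (n-m) c) \<in> avoiders (n-m) k"
    by (rule avoiders_char[THEN iffD2], intro conjI pL ce2 an2 mo2)
qed


lemma piece_card:
  assumes mn: "m \<le> n"
  shows "card {\<sigma>\<in>avoiders n (Suc k). {i\<in>{1..n}. snd \<sigma> i = 1} = {n-m<..n}}
         = Bell m * card (avoiders (n-m) k)"
proof -
  let ?S = "{n-m<..n}" and ?L = "{1..n-m}"
  let ?D = "{Q. partition_on ?S Q} \<times> avoiders (n-m) k"
  let ?pc = "{\<sigma>\<in>avoiders n (Suc k). {i\<in>{1..n}. snd \<sigma> i = 1} = ?S}"
  define g where "g = (\<lambda>(Q::nat set set,(P2::nat set set,c2::nat\<Rightarrow>nat)). (Q \<union> P2, cg n m c2))"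
  define h where "h = (\<lambda>(P::nat set set,c::nat\<Rightarrow>nat). ({B\<in>P. B \<subseteq> ?S}, ({B\<in>P. B \<subseteq> ?L}, ch (n-m) c)))"
  have SL: "?S \<inter> ?L = {}" by auto
  have bij: "bij_betw g ?D ?pc"
  proof (rule bij_betw_byWitness[where f'=h])
    show "\<forall>a\<in>?D. h (g a) = a"
    proof
      fix a assume a: "a \<in> ?D"
      obtain Q P2 c2 where a': "a = (Q, (P2, c2))" by (cases a) auto
      have Q: "partition_on ?S Q" and P2: "(P2, c2) \<in> avoiders (n-m) k" using a a' by auto
      have p2: "partition_on ?L P2" and c2: "c2 \<in> ?L \<rightarrow>\<^sub>E {1..k}"
        using avoiders_char[THEN iffD1, OF P2] by blast+
      have QS: "\<And>B. B \<in> Q \<Longrightarrow> B \<subseteq> ?S" using partition_onD1[OF Q] by auto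
      have PL: "\<And>B. B \<in> P2 \<Longrightarrow> B \<subseteq> ?L" using partition_onD1[OF p2] by auto
      have ne: "\<And>B. B \<in> Q \<union> P2 \<Longrightarrow> B \<noteq> {}" using partition_onD3[OF Q] partition_onD3[OF p2] by auto
      have e1: "{B\<in>Q \<union> P2. B \<subseteq> ?S} = Q"
      proof
        show "{B\<in>Q \<union> P2. B \<subseteq> ?S} \<subseteq> Q"
        proof
          fix B assume B: "B \<in> {B\<in>Q \<union> P2. B \<subseteq> ?S}"
          show "B \<in> Q"
          proof (rule ccontr)
            assume "B \<notin> Q"
            then have "B \<in> P2" using B by auto
            then have "B \<subseteq> ?L" "B \<noteq> {}" using PL ne by auto
            then show False using B SL by blast
          qed
        qed
      qed (use QS in auto)
      have e2: "{B\<in>Q \<union> P2. B \<subseteq> ?L} = P2"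
      proof
        show "{B\<in>Q \<union> P2. B \<subseteq> ?L} \<subseteq> P2"
        proof
          fix B assume B: "B \<in> {B\<in>Q \<union> P2. B \<subseteq> ?L}"
          show "B \<in> P2"
          proof (rule ccontr)
            assume "B \<notin> P2"
            then have "B \<in> Q" using B by auto
            then have "B \<subseteq> ?S" "B \<noteq> {}" using QS ne by auto
            then show False using B SL by blast
          qed
        qed
      qed (use PL in auto)
      have e3: "ch (n-m) (cg n m c2) = c2"
      proof
        fix i show "ch (n-m) (cg n m c2) i = c2 i"
        proof (cases "i \<in> ?L")
          case True
          then have "cg n m c2 i = Suc (c2 i)" unfolding cg_def using mn by auto
          then show ?thesis using True unfolding ch_def by simp
        next
          case False
          then have "c2 i = undefined" using c2 by (auto simp: PiE_def extensional_def)
          moreover have "ch (n-m) (cg n m c2) i = undefined" using False unfolding ch_def by auto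
          ultimately show ?thesis by simp
        qed
      qed
      show "h (g a) = a" unfolding a' g_def h_def using e1 e2 e3 by simp
    qed
    show "\<forall>a\<in>?pc. g (h a) = a"
    proof
      fix a assume a: "a \<in> ?pc"
      obtain P c where a': "a = (P, c)" by (cases a)
      have A: "(P, c) \<in> avoiders n (Suc k)" and fib: "{i\<in>{1..n}. c i = 1} = ?S"
        using a a' by auto
      have ce: "c \<in> {1..n} \<rightarrow>\<^sub>E {1..Suc k}" using avoiders_char[THEN iffD1, OF A] by blast
      have e1: "{B\<in>P. B \<subseteq> ?S} \<union> {B\<in>P. B \<subseteq> ?L} = P"
        using blocks_split[OF A fib mn] by auto
      have e2: "cg n m (ch (n-m) c) = c"
      proof
        fix i show "cg n m (ch (n-m) c) i = c i"
        proof (cases "i \<in> {1..n}")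
          case True
          then have cr: "c i \<in> {1..Suc k}" using ce by auto
          show ?thesis
          proof (cases "i \<le> n-m")
            case True2: True
            then have "cg n m (ch (n-m) c) i = Suc (c i - 1)" using True unfolding cg_def ch_def by auto
            then show ?thesis using cr by auto
          next
            case False
            then have "i \<in> ?S" using True by auto
            then have "c i = 1" using fib by blast
            then show ?thesis using True False unfolding cg_def by simp
          qed
        next
          case False
          then have "c i = undefined" using ce by (auto simp: PiE_def extensional_def)
          moreover have "cg n m (ch (n-m) c) i = undefined" using False unfolding cg_def by auto
          ultimately show ?thesis by simp
        qed
      qed
      show "g (h a) = a" unfolding a' g_def h_def using e1 e2 by simp
    qed
    show "g ` ?D \<subseteq> ?pc"
    proof
      fix x assume "x \<in> g ` ?D"
      then obtain Q P2 c2 where Q: "partition_on ?S Q" and P2: "(P2, c2) \<in> avoiders (n-m) k"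
        and x: "x = g (Q, (P2, c2))" by auto
      show "x \<in> ?pc" using g_in[OF mn Q P2] unfolding x g_def by simp
    qed
    show "h ` ?pc \<subseteq> ?D"
    proof
      fix x assume "x \<in> h ` ?pc"
      then obtain P c where A: "(P, c) \<in> avoiders n (Suc k)" and fib: "{i\<in>{1..n}. c i = 1} = ?S"
        and x: "x = h (P, c)" by auto
      show "x \<in> ?D" using h_in[OF A fib mn] unfolding x h_def by simp
    qed
  qed
  have "card ?pc = card ?D" using bij_betw_same_card[OF bij] by simp
  also have "\<dots> = Bell m * card (avoiders (n-m) k)"
    using Bell_shift[OF mn] by (simp add: card_cartesian_product)
  finally show ?thesis .
qed


lemma avoiders_finite: "finite (avoiders n k)"
proof (rule finite_subset)
  show "avoiders n k \<subseteq> set_partitions n \<times> ({1..n} \<rightarrow>\<^sub>E {1..k})"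
    unfolding avoiders_def colored_partitions_def by auto
  show "finite (set_partitions n \<times> ({1..n} \<rightarrow>\<^sub>E {1..k}))"
    unfolding set_partitions_def
    by (intro finite_cartesian_product finitely_many_partition_on finite_PiE) auto
qed

lemma fiber_shape:
  assumes A: "(P, c) \<in> avoiders n (Suc k)"
  shows "\<exists>m\<le>n. {i\<in>{1..n}. c i = 1} = {n-m<..n}"
proof -
  have ce: "c \<in> {1..n} \<rightarrow>\<^sub>E {1..Suc k}"
    and anti: "\<forall>i j. 1 \<le> i \<longrightarrow> i \<le> j \<longrightarrow> j \<le> n \<longrightarrow> c j \<le> c i"
    using avoiders_char[THEN iffD1, OF A] by blast+
  let ?F = "{i\<in>{1..n}. c i = 1}"
  show ?thesis
  proof (cases "?F = {}")
    case True
    then show ?thesis by (intro exI[of _ 0]) auto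
  next
    case False
    define a where "a = Min ?F"
    have fin: "finite ?F" by auto
    have aF: "a \<in> ?F" using Min_in[OF fin False] unfolding a_def .
    have "?F = {a..n}"
    proof
      show "?F \<subseteq> {a..n}" using Min_le[OF fin] unfolding a_def by auto
      show "{a..n} \<subseteq> ?F"
      proof
        fix x assume x: "x \<in> {a..n}"
        have "1 \<le> a" "c a = 1" using aF by auto
        then have "c x \<le> 1" using anti x by auto
        moreover have "c x \<in> {1..Suc k}" using ce x \<open>1 \<le> a\<close> by auto
        ultimately show "x \<in> ?F" using x \<open>1 \<le> a\<close> by auto
      qed
    qed
    moreover have "{a..n} = {n - (Suc n - a)<..n}" using aF by auto
    ultimately show ?thesis by (intro exI[of _ "Suc n - a"]) auto
  qed
qed

lemma A_Suc: "card (avoiders n (Suc k)) = (\<Sum>m\<le>n. Bell m * card (avoiders (n-m) k))"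
proof -
  define pc where "pc = (\<lambda>m. {\<sigma>\<in>avoiders n (Suc k). {i\<in>{1..n}. snd \<sigma> i = 1} = {n-m<..n}})"
  have cover: "avoiders n (Suc k) = (\<Union>m\<in>{..n}. pc m)"
  proof
    show "avoiders n (Suc k) \<subseteq> (\<Union>m\<in>{..n}. pc m)"
    proof
      fix \<sigma> assume s: "\<sigma> \<in> avoiders n (Suc k)"
      obtain P c where pc': "\<sigma> = (P, c)" by (cases \<sigma>)
      obtain m where "m \<le> n" "{i\<in>{1..n}. c i = 1} = {n-m<..n}"
        using fiber_shape[of P c n k] s pc' by auto
      then show "\<sigma> \<in> (\<Union>m\<in>{..n}. pc m)" unfolding pc_def using s pc' by auto
    qed
  qed (auto simp: pc_def)
  have disj: "\<forall>i\<in>{..n}. \<forall>j\<in>{..n}. i \<noteq> j \<longrightarrow> pc i \<inter> pc j = {}"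
  proof (intro ballI impI)
    fix i j assume ij: "i \<in> {..n}" "j \<in> {..n}" "i \<noteq> j"
    show "pc i \<inter> pc j = {}"
    proof (rule ccontr)
      assume "pc i \<inter> pc j \<noteq> {}"
      then have "{n-i<..n} = {n-j<..n}" unfolding pc_def by auto
      then have "card {n-i<..n} = card {n-j<..n}" by simp
      then show False using ij by simp
    qed
  qed
  have fin: "\<forall>i\<in>{..n}. finite (pc i)"
    using avoiders_finite[of n "Suc k"] unfolding pc_def by auto
  have "card (avoiders n (Suc k)) = (\<Sum>m\<le>n. card (pc m))"
    unfolding cover by (rule card_UN_disjoint[OF _ fin disj]) simp
  also have "\<dots> = (\<Sum>m\<le>n. Bell m * card (avoiders (n-m) k))"
  proof (rule sum.cong[OF refl])
    fix m assume "m \<in> {..n}"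
    then show "card (pc m) = Bell m * card (avoiders (n-m) k)"
      unfolding pc_def using piece_card[of m n k] by simp
  qed
  finally show ?thesis .
qed

lemma A_0: "card (avoiders n 0) = (if n = 0 then 1 else 0)"
proof (cases "n = 0")
  case True
  have "avoiders 0 0 = {({}, \<lambda>_. undefined)}"
  proof
    show "avoiders 0 0 \<subseteq> {({}, \<lambda>_. undefined)}"
    proof
      fix \<sigma> assume s: "\<sigma> \<in> avoiders 0 0"
      obtain P c where e: "\<sigma> = (P, c)" by (cases \<sigma>)
      have "partition_on {1..0} P" "c \<in> {1..0} \<rightarrow>\<^sub>E {1..0}"
        using avoiders_char[THEN iffD1, OF s[unfolded e]] by blast+
      then have "P = {}" "c = (\<lambda>_. undefined)" by (auto simp: partition_on_empty)
      then show "\<sigma> \<in> {({}, \<lambda>_. undefined)}" using e by simp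
    qed
    show "{({}, \<lambda>_. undefined)} \<subseteq> avoiders 0 0"
      by (auto intro!: avoiders_char[THEN iffD2] simp: partition_on_empty)
  qed
  then show ?thesis using True by simp
next
  case False
  have "avoiders n 0 = {}"
  proof -
    have "({1..n} \<rightarrow>\<^sub>E {1..0::nat}) = {}" using False by (auto simp: PiE_eq_empty_iff)
    then show ?thesis unfolding avoiders_def colored_partitions_def by auto
  qed
  then show ?thesis using False by simp
qed

lemma A_F: "card (avoiders n k) = Fs k n"
proof (induction k arbitrary: n)
  case 0
  then show ?case by (simp add: A_0 F_0)
next
  case (Suc k)
  then show ?case by (simp add: A_Suc F_Suc)
qed

theorem mainTheorem19:
  fixes n k :: nat
  assumes "k \<ge> 1"
  shows "card (avoiders n k) = (\<Sum>t\<in>compositions k n. \<Prod>j=1..k. Bell (t j))"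
  using A_F[of n k] unfolding Fs_def .

end
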